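(* Let $\bm M_1,\bm M_2$ be real matrices of the same dimension with $\|\bm M_1\|_S=\mu$, $\|\bm M_2\|_S=\nu$. Let $\theta=\Theta(\bm M_1,\bm M_2)$ be the smallest principal angle between their column spaces and $\eta=\Theta(\bm M_1',\bm M_2')$ the smallest principal angle between their row spaces. Then $\|\bm M_1+\bm M_2\|_S^2\le\Lambda^2(\mu,\nu,\theta,\eta)$, where $$\Lambda^2(\mu,\nu,\theta,\eta)=\frac12\Big[\sqrt{(\mu^2+\nu^2+2\mu\nu\cos\theta\cos\eta)^2-4\mu^2\nu^2\sin^2\theta\sin^2\eta}+\mu^2+\nu^2+2\mu\nu\cos\theta\cos\eta\Big].$$
   Context: $\|\cdot\|_S$ is the spectral norm. For matrices $\bm M_1,\bm M_2$ with the same number of rows (both nonzero), the smallest principal angle $\Theta(\bm M_1,\bm M_2)\in[0,\pi/2]$ between their column spaces is defined by $\cos\Theta(\bm M_1,\bm M_2)=\sup\frac{u_1'\bm M_1'\bm M_2u_2}{\|\bm M_1u_1\|\,\|\bm M_2u_2\|}$, the supremum over $u_1,u_2$ with $\bm M_1u_1\ne0$, $\bm M_2u_2\ne0$. *)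

theory Defs
  imports "HOL-Analysis.Analysis"
begin

definition spec_norm :: "real^'n^'m \<Rightarrow> real" where
  "spec_norm M = onorm (\<lambda>x. M *v x)"

definition cos_principal_angle :: "real^'n^'m \<Rightarrow> real^'k^'m \<Rightarrow> real" where
  "cos_principal_angle M1 M2 =
     Sup {((M1 *v u1) \<bullet> (M2 *v u2)) / (norm (M1 *v u1) * norm (M2 *v u2)) | u1 u2.
            M1 *v u1 \<noteq> 0 \<and> M2 *v u2 \<noteq> 0}"

definition principal_angle :: "real^'n^'m \<Rightarrow> real^'k^'m \<Rightarrow> real" where
  "principal_angle M1 M2 = arccos (cos_principal_angle M1 M2)"

definition Lambda2 :: "real \<Rightarrow> real \<Rightarrow> real \<Rightarrow> real \<Rightarrow> real" where
  "Lambda2 \<mu> \<nu> \<theta> \<eta> =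
     (1/2) * (sqrt ((\<mu>^2 + \<nu>^2 + 2*\<mu>*\<nu>*cos \<theta>*cos \<eta>)^2
                    - 4*\<mu>^2*\<nu>^2*(sin \<theta>)^2*(sin \<eta>)^2)
              + \<mu>^2 + \<nu>^2 + 2*\<mu>*\<nu>*cos \<theta>*cos \<eta>)"

end

theory Submission
  imports Defs
begin

lemma psd2:
  fixes A B C x y :: real
  assumes "0 \<le> A" "0 \<le> C" "A*C = B^2"
  shows "0 \<le> A*x^2 + 2*B*x*y + C*y^2"
proof (cases "A = 0")
  case True
  then have "B = 0" using assms by simp
  then show ?thesis using True assms by simp
next
  case False
  then have Ap: "A > 0" using assms by simp
  have "A*(A*x^2 + 2*B*x*y + C*y^2) = (A*x+B*y)^2" using assms(3)
    by (simp add: power2_eq_square algebra_simps)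
  also have "\<dots> \<ge> 0" by simp
  finally show ?thesis using Ap by (simp add: zero_le_mult_iff)
qed

lemma Kcore:
  fixes mu nu c d t1 t2 n lam :: real
  assumes "d < 1" "0 \<le> d"
    and e: "t1^2+t2^2-2*d*t1*t2 \<le> n^2*(1-d^2)"
    and eq: "lam^2 - (mu^2+nu^2+2*mu*nu*c*d)*lam + mu^2*nu^2*(1-c^2)*(1-d^2) = 0"
    and l1: "(1-d^2)*mu^2 \<le> lam" and l2: "(1-d^2)*nu^2 \<le> lam"
  shows "mu^2*t1^2+nu^2*t2^2+2*c*mu*nu*t1*t2 \<le> lam*n^2"
proof -
  define s where "s = 1-d^2"
  have "d^2 \<le> d" using assms(1,2) by (simp add: power2_eq_square mult_left_le_one_le)
  then have sp: "s > 0" unfolding s_def using assms(1) by linarith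
  have lp: "lam \<ge> 0" using l1 sp s_def by (smt (verit) mult_nonneg_nonneg zero_le_power2)
  have "(lam - s*mu^2)*(lam - s*nu^2) = (-(lam*d + s*c*mu*nu))^2"
  proof -
    have "(lam - s*mu^2)*(lam - s*nu^2) - (-(lam*d + s*c*mu*nu))^2
          = s*(lam^2 - (mu^2+nu^2+2*mu*nu*c*d)*lam + mu^2*nu^2*(1-c^2)*(1-d^2))"
      unfolding s_def by (simp add: power2_eq_square algebra_simps)
    then show ?thesis using eq by simp
  qed
  from psd2[OF _ _ this, of t1 t2] l1 l2
  have "0 \<le> (lam - s*mu^2)*t1^2 + 2*(-(lam*d + s*c*mu*nu))*t1*t2 + (lam - s*nu^2)*t2^2"
    unfolding s_def by (simp add: mult.commute)
  then have "s*(mu^2*t1^2+nu^2*t2^2+2*c*mu*nu*t1*t2) \<le> lam*(t1^2+t2^2-2*d*t1*t2)"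
    by (simp add: algebra_simps)
  also have "\<dots> \<le> lam*(n^2* s)" using e lp unfolding s_def by (simp add: mult_left_mono)
  finally have "s*(mu^2*t1^2+nu^2*t2^2+2*c*mu*nu*t1*t2) \<le> s*(lam*n^2)" by (simp add: algebra_simps)
  then show ?thesis using sp by simp
qed

lemma lam_facts:
  fixes mu nu c d :: real
  defines "T \<equiv> mu^2+nu^2+2*mu*nu*c*d"
  defines "lam \<equiv> (1/2)*(sqrt(T^2 - 4*mu^2*nu^2*(1-c^2)*(1-d^2)) + T)"
  assumes "0 \<le> mu" "0 \<le> nu" "0 \<le> c" "c \<le> 1" "0 \<le> d" "d \<le> 1"
  shows "lam^2 - (mu^2+nu^2+2*mu*nu*c*d)*lam + mu^2*nu^2*(1-c^2)*(1-d^2) = 0"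
    and "(1-d^2)*mu^2 \<le> lam" and "(1-d^2)*nu^2 \<le> lam"
    and "d = 1 \<Longrightarrow> lam = T"
proof -
  define D where "D = mu^2*nu^2*(1-c^2)*(1-d^2)"
  define R where "R = sqrt(T^2 - 4*D)"
  have c2: "c^2 \<le> 1" "0 \<le> c^2" using assms(5,6) power_le_one[of c 2] by simp_all
  have d2: "d^2 \<le> 1" "0 \<le> d^2" using assms(7,8) power_le_one[of d 2] by simp_all
  have T0: "T \<ge> mu^2+nu^2" unfolding T_def using assms by (simp add: mult_nonneg_nonneg)
  have cd1: "(1-c^2)*(1-d^2) \<le> 1" "0 \<le> (1-c^2)*(1-d^2)" using c2 d2
    by (auto intro!: mult_le_one)
  have D0: "0 \<le> D \<and> D \<le> mu^2*nu^2"
  proof -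
    have "mu^2*nu^2*((1-c^2)*(1-d^2)) \<le> mu^2*nu^2*1"
      by (rule mult_left_mono[OF cd1(1)]) simp
    moreover have "0 \<le> mu^2*nu^2*((1-c^2)*(1-d^2))" using cd1(2) by simp
    ultimately show ?thesis unfolding D_def by (simp add: mult.assoc)
  qed
  have "(mu^2+nu^2)^2 \<ge> 4*(mu^2*nu^2)"
  proof -
    have "(mu^2+nu^2)^2 - 4*(mu^2*nu^2) = (mu^2-nu^2)^2" by (simp add: power2_eq_square algebra_simps)
    then show ?thesis by (smt (verit) zero_le_power2)
  qed
  moreover have "T^2 \<ge> (mu^2+nu^2)^2" using T0 by (simp add: power_mono)
  ultimately have disc: "T^2 - 4*D \<ge> 0" using D0 by linarith
  have RR: "R^2 = T^2 - 4*D" "R \<ge> 0" unfolding R_def using disc by auto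
  have lamR: "lam = (R + T)/2" unfolding lam_def R_def D_def by simp
  have eq: "lam^2 - T*lam + D = 0" unfolding lamR using RR
    by (simp add: power2_eq_square field_simps)
  then show "lam^2 - (mu^2+nu^2+2*mu*nu*c*d)*lam + mu^2*nu^2*(1-c^2)*(1-d^2) = 0"
    unfolding T_def D_def by simp
  have root: "x \<le> lam" if "x^2 - T*x + D \<le> 0" for x
  proof -
    have "(x - T/2)^2 \<le> (R/2)^2" using that RR by (simp add: power2_eq_square field_simps)
    then have "x - T/2 \<le> R/2" using RR
      by (smt (verit) divide_nonneg_nonneg power2_le_imp_le)
    then show ?thesis unfolding lamR by simp
  qed
  show "(1-d^2)*mu^2 \<le> lam"
  proof (rule root)
    have "((1-d^2)*mu^2)^2 - T*((1-d^2)*mu^2) + D = -(1-d^2)*mu^2*(d*mu+c*nu)^2"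
      unfolding T_def D_def by (simp add: power2_eq_square algebra_simps)
    also have "\<dots> \<le> 0"
    proof -
      have "0 \<le> (1-d^2)*mu^2*(d*mu+c*nu)^2" using d2 by (intro mult_nonneg_nonneg) auto
      then show ?thesis by linarith
    qed
    finally show "((1-d^2)*mu^2)^2 - T*((1-d^2)*mu^2) + D \<le> 0" .
  qed
  show "(1-d^2)*nu^2 \<le> lam"
  proof (rule root)
    have "((1-d^2)*nu^2)^2 - T*((1-d^2)*nu^2) + D = -(1-d^2)*nu^2*(d*nu+c*mu)^2"
      unfolding T_def D_def by (simp add: power2_eq_square algebra_simps)
    also have "\<dots> \<le> 0"
    proof -
      have "0 \<le> (1-d^2)*nu^2*(d*nu+c*mu)^2" using d2 by (intro mult_nonneg_nonneg) auto
      then show ?thesis by linarith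
    qed
    finally show "((1-d^2)*nu^2)^2 - T*((1-d^2)*nu^2) + D \<le> 0" .
  qed
  show "d = 1 \<Longrightarrow> lam = T"
  proof -
    assume "d = 1"
    then have "D = 0" unfolding D_def by simp
    moreover have "T \<ge> 0" using T0 by (smt (verit) zero_le_power2)
    ultimately show "lam = T" unfolding lamR R_def by simp
  qed
qed

lemma Kfull:
  fixes mu nu c d t1 t2 n lam :: real
  assumes lamdef: "lam = (1/2)*(sqrt((mu^2+nu^2+2*mu*nu*c*d)^2 - 4*mu^2*nu^2*(1-c^2)*(1-d^2)) + (mu^2+nu^2+2*mu*nu*c*d))"
  assumes "0 \<le> mu" "0 \<le> nu" "0 \<le> c" "c \<le> 1" "0 \<le> d" "d \<le> 1"
    and "0 \<le> t1" "t1 \<le> n" "0 \<le> t2"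
    and e: "t1^2+t2^2-2*d*t1*t2 \<le> n^2*(1-d^2)"
  shows "mu^2*t1^2+nu^2*t2^2+2*c*mu*nu*t1*t2 \<le> lam*n^2"
proof (cases "d = 1")
  case True
  have "(t1-t2)^2 \<le> 0" using e True by (simp add: power2_eq_square algebra_simps)
  then have tt: "t2 = t1" by simp
  have lT: "lam = mu^2+nu^2+2*mu*nu*c*d" using lam_facts(4)[of mu nu c d] assms(2-7) True unfolding lamdef by blast
  have "t1^2 \<le> n^2" using assms by (simp add: power_mono)
  moreover have "0 \<le> mu^2+nu^2+2*mu*nu*c" using assms by (simp add: mult_nonneg_nonneg)
  ultimately have "t1^2*(mu^2+nu^2+2*mu*nu*c) \<le> n^2*(mu^2+nu^2+2*mu*nu*c)"
    by (rule mult_right_mono)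
  then show ?thesis using tt lT True by (simp add: power2_eq_square algebra_simps)
next
  case False
  then have d1: "d < 1" using assms by simp
  have f: "lam^2 - (mu^2+nu^2+2*mu*nu*c*d)*lam + mu^2*nu^2*(1-c^2)*(1-d^2) = 0"
     "(1-d^2)*mu^2 \<le> lam" "(1-d^2)*nu^2 \<le> lam"
    using lam_facts(1-3)[of mu nu c d] assms(2-7) unfolding lamdef by blast+
  show ?thesis by (rule Kcore[OF d1 assms(6) e f])
qed

lemma main_alg:
  fixes mu nu c d t1 t2 n lam :: real
  assumes lamdef: "lam = (1/2)*(sqrt((mu^2+nu^2+2*mu*nu*c*d)^2 - 4*mu^2*nu^2*(1-c^2)*(1-d^2)) + (mu^2+nu^2+2*mu*nu*c*d))"
  assumes "0 \<le> mu" "0 \<le> nu" "0 \<le> c" "c \<le> 1" "0 \<le> d" "d \<le> 1"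
    and "0 \<le> t1" "t1 \<le> n" "0 \<le> t2" "t2 \<le> n"
    and H: "\<And>s r. 0 \<le> s \<Longrightarrow> 0 \<le> r \<Longrightarrow>
       (s*t1^2 + r*t2^2)^2 \<le> n^2*(s^2*t1^2+r^2*t2^2+2*d* s*r*t1*t2)"
  shows "mu^2*t1^2+nu^2*t2^2+2*c*mu*nu*t1*t2 \<le> lam*n^2"
proof -
  have d2: "d^2 \<le> 1" using assms(6,7) power_le_one[of d 2] by simp
  have n0: "0 \<le> n" using assms by linarith
  consider "d*t1 \<le> t2 \<and> d*t2 \<le> t1" | "t2 < d*t1" | "t1 < d*t2" by linarith
  then show ?thesis
  proof cases
    case 1
    define e where "e = t1^2+t2^2-2*d*t1*t2"
    have "e \<le> n^2*(1-d^2)"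
    proof (cases "t1 = 0 \<or> t2 = 0")
      case True
      then show ?thesis
      proof
        assume t: "t1 = 0"
        then have "d*t2 \<le> 0" using 1 by simp
        then have "d = 0 \<or> t2 = 0" using assms by (simp add: mult_le_0_iff) (smt (verit))
        then show ?thesis using t assms unfolding e_def
          by (auto simp: power_mono mult_nonneg_nonneg d2)
      next
        assume t: "t2 = 0"
        then have "d*t1 \<le> 0" using 1 by simp
        then have "d = 0 \<or> t1 = 0" using assms by (simp add: mult_le_0_iff) (smt (verit))
        then show ?thesis using t assms unfolding e_def
          by (auto simp: power_mono mult_nonneg_nonneg d2)
      qed
    next
      case False
      then have p: "t1*t2 > 0" using assms by simp
      have h: "(t2*(t1-d*t2)*t1^2 + t1*(t2-d*t1)*t2^2)^2 \<le>
          n^2*((t2*(t1-d*t2))^2*t1^2+(t1*(t2-d*t1))^2*t2^2+2*d*(t2*(t1-d*t2))*(t1*(t2-d*t1))*t1*t2)"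
        using 1 assms by (intro H) auto
      have eq1: "t2*(t1-d*t2)*t1^2 + t1*(t2-d*t1)*t2^2 = (t1*t2)*e"
        unfolding e_def by (simp add: power2_eq_square algebra_simps)
      have eq2: "(t2*(t1-d*t2))^2*t1^2+(t1*(t2-d*t1))^2*t2^2+2*d*(t2*(t1-d*t2))*(t1*(t2-d*t1))*t1*t2
          = (t1*t2)^2*((1-d^2)*e)"
        unfolding e_def by (simp add: power2_eq_square algebra_simps)
      have "((t1*t2)*e)^2 \<le> n^2*((t1*t2)^2*((1-d^2)*e))" using h unfolding eq1 eq2 .
      then have "(t1*t2)^2*e^2 \<le> (t1*t2)^2*(n^2*((1-d^2)*e))"
        by (simp only: power_mult_distrib mult.left_commute)
      moreover have pp: "(t1*t2)^2 > 0" using p by (simp add: power2_eq_square)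
      ultimately have ee: "e^2 \<le> n^2*((1-d^2)*e)" by (simp only: mult_le_cancel_left_pos)
      show ?thesis
      proof (cases "e > 0")
        case True
        then have "e*e \<le> (n^2*(1-d^2))*e" using ee by (simp add: power2_eq_square algebra_simps)
        then show ?thesis using True by simp
      next
        case False
        then show ?thesis using d2 by (smt (verit) mult_nonneg_nonneg zero_le_power2)
      qed
    qed
    then show ?thesis using Kfull[OF lamdef] assms unfolding e_def by blast
  next
    case 2
    have "mu^2*t1^2+nu^2*t2^2+2*c*mu*nu*t1*t2 \<le> mu^2*t1^2+nu^2*(d*t1)^2+2*c*mu*nu*t1*(d*t1)"
    proof -
      have "t2^2 \<le> (d*t1)^2" using 2 assms by (simp add: power_mono)
      then have a: "nu^2*t2^2 \<le> nu^2*(d*t1)^2" by (simp add: mult_left_mono)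
      have "c*mu*nu*t1*t2 \<le> c*mu*nu*t1*(d*t1)" using 2 assms
        by (intro mult_left_mono) (auto simp: mult_nonneg_nonneg)
      then show ?thesis using a by linarith
    qed
    also have "\<dots> \<le> lam*n^2"
    proof (rule Kfull[OF lamdef])
      show "t1\<^sup>2 + (d * t1)\<^sup>2 - 2 * d * t1 * (d * t1) \<le> n\<^sup>2 * (1 - d\<^sup>2)"
      proof -
        have "t1^2 \<le> n^2" using assms by (simp add: power_mono)
        then have "t1^2*(1-d^2) \<le> n^2*(1-d^2)" using d2 by (simp add: mult_right_mono)
        then show ?thesis by (simp add: power2_eq_square algebra_simps)
      qed
    qed (use assms in \<open>auto simp: mult_nonneg_nonneg\<close>)
    finally show ?thesis .
  next
    case 3
    have "mu^2*t1^2+nu^2*t2^2+2*c*mu*nu*t1*t2 \<le> mu^2*(d*t2)^2+nu^2*t2^2+2*c*mu*nu*(d*t2)*t2"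
    proof -
      have "t1^2 \<le> (d*t2)^2" using 3 assms by (simp add: power_mono)
      then have a: "mu^2*t1^2 \<le> mu^2*(d*t2)^2" by (simp add: mult_left_mono)
      have "c*mu*nu*t2*t1 \<le> c*mu*nu*t2*(d*t2)" using 3 assms
        by (intro mult_left_mono) (auto simp: mult_nonneg_nonneg)
      then show ?thesis using a by (simp add: algebra_simps)
    qed
    also have "\<dots> = nu^2*t2^2+mu^2*(d*t2)^2+2*c*nu*mu*t2*(d*t2)" by (simp add: algebra_simps)
    also have "\<dots> \<le> lam*n^2"
    proof (rule Kfull)
      show "lam = (1/2)*(sqrt((nu^2+mu^2+2*nu*mu*c*d)^2 - 4*nu^2*mu^2*(1-c^2)*(1-d^2)) + (nu^2+mu^2+2*nu*mu*c*d))"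
        using lamdef by (simp add: algebra_simps)
      show "t2\<^sup>2 + (d * t2)\<^sup>2 - 2 * d * t2 * (d * t2) \<le> n\<^sup>2 * (1 - d\<^sup>2)"
      proof -
        have "t2^2 \<le> n^2" using assms by (simp add: power_mono)
        then have "t2^2*(1-d^2) \<le> n^2*(1-d^2)" using d2 by (simp add: mult_right_mono)
        then show ?thesis by (simp add: power2_eq_square algebra_simps)
      qed
    qed (use assms in \<open>auto simp: mult_nonneg_nonneg\<close>)
    finally show ?thesis .
  qed
qed

lemma mv_neg: "(M::real^'n^'m) *v (-u) = - (M *v u)"
  by (metis scaleR_minus1_left matrix_vector_mult_scaleR)

lemma nonzero_ex: "(M::real^'n^'m) \<noteq> 0 \<Longrightarrow> \<exists>u. M *v u \<noteq> 0"
  using matrix_eq[of M 0] by auto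

lemma cpa_props:
  fixes M1 :: "real^'n^'m" and M2 :: "real^'k^'m"
  assumes "M1 \<noteq> 0" "M2 \<noteq> 0"
  shows "0 \<le> cos_principal_angle M1 M2" "cos_principal_angle M1 M2 \<le> 1"
    "(M1 *v u1) \<bullet> (M2 *v u2) \<le> cos_principal_angle M1 M2 * norm (M1 *v u1) * norm (M2 *v u2)"
proof -
  define S where "S = {((M1 *v u1) \<bullet> (M2 *v u2)) / (norm (M1 *v u1) * norm (M2 *v u2)) | u1 u2.
            M1 *v u1 \<noteq> 0 \<and> M2 *v u2 \<noteq> 0}"
  have cpa: "cos_principal_angle M1 M2 = Sup S" unfolding S_def cos_principal_angle_def ..
  have le1: "y \<le> 1" if "y \<in> S" for y
  proof -
    from that obtain u1 u2 where y: "y = ((M1 *v u1) \<bullet> (M2 *v u2)) / (norm (M1 *v u1) * norm (M2 *v u2))"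
      and nz: "M1 *v u1 \<noteq> 0" "M2 *v u2 \<noteq> 0" unfolding S_def by blast
    have "norm (M1 *v u1) * norm (M2 *v u2) > 0" using nz by simp
    then show ?thesis unfolding y using norm_cauchy_schwarz by (simp add: pos_divide_le_eq)
  qed
  have bdd: "bdd_above S" unfolding bdd_above_def using le1 by blast
  obtain u1 u2 where nz: "M1 *v u1 \<noteq> 0" "M2 *v u2 \<noteq> 0" using nonzero_ex assms by metis
  define r where "r = ((M1 *v u1) \<bullet> (M2 *v u2)) / (norm (M1 *v u1) * norm (M2 *v u2))"
  have rS: "r \<in> S" unfolding S_def r_def using nz by blast
  have "((M1 *v (-u1)) \<bullet> (M2 *v u2)) / (norm (M1 *v (-u1)) * norm (M2 *v u2)) \<in> S"
    unfolding S_def mem_Collect_eq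
    by (rule exI[of _ "-u1"], rule exI[of _ u2]) (simp add: nz mv_neg)
  then have mrS: "-r \<in> S" unfolding r_def by (simp add: mv_neg)
  have "r \<le> Sup S" "-r \<le> Sup S" using cSup_upper[OF rS bdd] cSup_upper[OF mrS bdd] by auto
  then show "0 \<le> cos_principal_angle M1 M2" unfolding cpa by linarith
  have "S \<noteq> {}" using rS by blast
  then show "cos_principal_angle M1 M2 \<le> 1" unfolding cpa using le1 by (rule cSup_least)
  show "(M1 *v u1) \<bullet> (M2 *v u2) \<le> cos_principal_angle M1 M2 * norm (M1 *v u1) * norm (M2 *v u2)"
    for u1 u2
  proof (cases "M1 *v u1 = 0 \<or> M2 *v u2 = 0")
    case True
    then show ?thesis by auto
  next
    case False
    then have pos: "norm (M1 *v u1) * norm (M2 *v u2) > 0" by simp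
    have "((M1 *v u1) \<bullet> (M2 *v u2)) / (norm (M1 *v u1) * norm (M2 *v u2)) \<in> S"
      unfolding S_def using False by blast
    then have "((M1 *v u1) \<bullet> (M2 *v u2)) / (norm (M1 *v u1) * norm (M2 *v u2)) \<le> Sup S"
      using bdd by (rule cSup_upper)
    then show ?thesis unfolding cpa using pos by (simp add: divide_le_eq mult.assoc)
  qed
qed

lemma sn_bound: "norm ((M::real^'n^'m) *v x) \<le> spec_norm M * norm x"
  unfolding spec_norm_def by (rule onorm) simp

lemma sn_nonneg: "0 \<le> spec_norm (M::real^'n^'m)"
  unfolding spec_norm_def by (rule onorm_pos_le) simp

lemma sn_pos: "(M::real^'n^'m) \<noteq> 0 \<Longrightarrow> 0 < spec_norm M"
  unfolding spec_norm_def using onorm_pos_lt[of "\<lambda>x. M *v x"] nonzero_ex by auto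

lemma sn_transpose_bound: "norm (transpose (M::real^'n^'m) *v y) \<le> spec_norm M * norm y"
proof -
  define z where "z = transpose M *v y"
  have "norm z ^ 2 = z \<bullet> z" by (simp add: power2_norm_eq_inner)
  also have "\<dots> = y \<bullet> (M *v z)" unfolding z_def by (simp add: dot_lmul_matrix)
  also have "\<dots> \<le> norm y * norm (M *v z)" by (rule norm_cauchy_schwarz)
  also have "\<dots> \<le> norm y * (spec_norm M * norm z)" by (simp add: mult_left_mono sn_bound)
  finally have h: "norm z * norm z \<le> (spec_norm M * norm y) * norm z"
    by (simp add: power2_eq_square algebra_simps)
  show ?thesis
  proof (cases "norm z = 0")
    case True then show ?thesis unfolding z_def using sn_nonneg[of M] by simp
  next
    case False then show ?thesis using h unfolding z_def[symmetric] by simp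
  qed
qed


lemma H_lemma:
  fixes M1 M2 :: "real^'n^'m" and x :: "real^'n"
  assumes "M1 \<noteq> 0" "M2 \<noteq> 0" "0 \<le> s" "0 \<le> r"
  defines "mu \<equiv> spec_norm M1" and "nu \<equiv> spec_norm M2"
  defines "d \<equiv> cos_principal_angle (transpose M1) (transpose M2)"
  defines "t1 \<equiv> norm (M1 *v x) / mu" and "t2 \<equiv> norm (M2 *v x) / nu"
  shows "(s*t1^2 + r*t2^2)^2 \<le> (norm x)^2*(s^2*t1^2+r^2*t2^2+2*d* s*r*t1*t2)"
proof -
  have mup: "mu > 0" unfolding mu_def using sn_pos assms by blast
  have nup: "nu > 0" unfolding nu_def using sn_pos assms by blast
  have tz: "transpose (0::real^'n^'m) = 0" by (simp add: transpose_def vec_eq_iff)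
  have T1: "transpose M1 \<noteq> 0" using assms(1) tz by (metis transpose_transpose)
  have T2: "transpose M2 \<noteq> 0" using assms(2) tz by (metis transpose_transpose)
  have d0: "0 \<le> d" unfolding d_def by (rule cpa_props(1)[OF T1 T2])
  define a where "a = norm (M1 *v x)"
  define b where "b = norm (M2 *v x)"
  define p where "p = transpose M1 *v (M1 *v x)"
  define q where "q = transpose M2 *v (M2 *v x)"
  define al where "al = s/mu^2"
  define be where "be = r/nu^2"
  define v where "v = al *\<^sub>R p + be *\<^sub>R q"
  have a0: "0 \<le> a" "0 \<le> b" unfolding a_def b_def by simp_all
  have t1a: "t1 = a/mu" "t2 = b/nu" unfolding t1_def t2_def a_def b_def by simp_all
  have xp: "x \<bullet> p = a^2" unfolding p_def a_def
    by (simp add: inner_commute[of x] dot_lmul_matrix power2_norm_eq_inner)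
  have xq: "x \<bullet> q = b^2" unfolding q_def b_def
    by (simp add: inner_commute[of x] dot_lmul_matrix power2_norm_eq_inner)
  have xv: "x \<bullet> v = s*t1^2 + r*t2^2"
    unfolding v_def inner_add_right inner_scaleR_right xp xq al_def be_def t1a
    by (simp add: power_divide)
  have "\<bar>x \<bullet> v\<bar> \<le> norm x * norm v" by (rule Cauchy_Schwarz_ineq2)
  then have "\<bar>x \<bullet> v\<bar>^2 \<le> (norm x * norm v)^2" using power_mono abs_ge_zero by blast
  then have cs: "(s*t1^2 + r*t2^2)^2 \<le> (norm x)^2 * (norm v)^2"
    unfolding xv by (simp add: power_mult_distrib)
  have pq: "p \<bullet> q \<le> d * norm p * norm q" unfolding p_def q_def d_def
    by (rule cpa_props(3)[OF T1 T2])
  have np: "norm p \<le> mu * a" unfolding p_def mu_def a_def by (rule sn_transpose_bound)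
  have nq: "norm q \<le> nu * b" unfolding q_def nu_def b_def by (rule sn_transpose_bound)
  have al0: "0 \<le> al" "0 \<le> be" unfolding al_def be_def using assms by simp_all
  define P where "P = al * norm p"
  define Q where "Q = be * norm q"
  have P0: "0 \<le> P" "0 \<le> Q" unfolding P_def Q_def using al0 by simp_all
  have Pb: "P \<le> s*t1"
  proof -
    have "P \<le> al * (mu*a)" unfolding P_def using np al0 by (simp add: mult_left_mono)
    also have "\<dots> = s*t1" unfolding al_def t1a using mup by (simp add: power2_eq_square)
    finally show ?thesis .
  qed
  have Qb: "Q \<le> r*t2"
  proof -
    have "Q \<le> be * (nu*b)" unfolding Q_def using nq al0 by (simp add: mult_left_mono)
    also have "\<dots> = r*t2" unfolding be_def t1a using nup by (simp add: power2_eq_square)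
    finally show ?thesis .
  qed
  have "(norm v)^2 = al^2*(norm p)^2 + be^2*(norm q)^2 + 2*al*be*(p \<bullet> q)"
    unfolding v_def power2_norm_eq_inner
    by (simp add: inner_add_left inner_add_right inner_commute power2_eq_square algebra_simps)
  also have "\<dots> \<le> al^2*(norm p)^2 + be^2*(norm q)^2 + 2*al*be*(d * norm p * norm q)"
    using pq al0 by (simp add: mult_left_mono)
  also have "\<dots> = P^2 + Q^2 + 2*d*P*Q" unfolding P_def Q_def by (simp add: power2_eq_square algebra_simps)
  also have "\<dots> \<le> (s*t1)^2 + (r*t2)^2 + 2*d*(s*t1)*(r*t2)"
  proof -
    have "P^2 \<le> (s*t1)^2" "Q^2 \<le> (r*t2)^2" using P0 Pb Qb by (simp_all add: power_mono)
    moreover have "P*Q \<le> (s*t1)*(r*t2)" using P0 Pb Qb by (intro mult_mono) auto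
    then have "d*(P*Q) \<le> d*((s*t1)*(r*t2))" using d0 by (rule mult_left_mono)
    ultimately show ?thesis by (simp add: algebra_simps)
  qed
  also have "\<dots> = s^2*t1^2+r^2*t2^2+2*d* s*r*t1*t2" by (simp add: power2_eq_square algebra_simps)
  finally have "(norm v)^2 \<le> s^2*t1^2+r^2*t2^2+2*d* s*r*t1*t2" .
  then have "(norm x)^2 * (norm v)^2 \<le> (norm x)^2*(s^2*t1^2+r^2*t2^2+2*d* s*r*t1*t2)"
    by (simp add: mult_left_mono)
  then show ?thesis using cs by linarith
qed

theorem lemma2:
  fixes M1 M2 :: "real^'n^'m"
  assumes "M1 \<noteq> 0" and "M2 \<noteq> 0"
  shows "(spec_norm (M1 + M2))^2 \<le>
           Lambda2 (spec_norm M1) (spec_norm M2)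
                   (principal_angle M1 M2)
                   (principal_angle (transpose M1) (transpose M2))"
proof -
  define mu where "mu = spec_norm M1"
  define nu where "nu = spec_norm M2"
  define c where "c = cos_principal_angle M1 M2"
  define d where "d = cos_principal_angle (transpose M1) (transpose M2)"
  define lam where "lam = (1/2)*(sqrt((mu^2+nu^2+2*mu*nu*c*d)^2 - 4*mu^2*nu^2*(1-c^2)*(1-d^2)) + (mu^2+nu^2+2*mu*nu*c*d))"
  have mup: "mu > 0" unfolding mu_def using sn_pos assms by blast
  have nup: "nu > 0" unfolding nu_def using sn_pos assms by blast
  have tz: "transpose (0::real^'n^'m) = 0" by (simp add: transpose_def vec_eq_iff)
  have T1: "transpose M1 \<noteq> 0" using assms(1) tz by (metis transpose_transpose)
  have T2: "transpose M2 \<noteq> 0" using assms(2) tz by (metis transpose_transpose)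
  have c01: "0 \<le> c" "c \<le> 1" unfolding c_def using cpa_props[OF assms] by auto
  have d01: "0 \<le> d" "d \<le> 1" unfolding d_def using cpa_props[OF T1 T2] by auto
  have lam0: "0 \<le> lam"
  proof -
    have "(1-d^2)*mu^2 \<le> lam" using lam_facts(2)[of mu nu c d] mup nup c01 d01 unfolding lam_def by simp
    moreover have "0 \<le> (1-d^2)*mu^2" using d01 power_le_one[of d 2] by simp
    ultimately show ?thesis by linarith
  qed
  have key: "norm ((M1 + M2) *v x) \<le> sqrt lam * norm x" for x
  proof -
    define a where "a = norm (M1 *v x)"
    define b where "b = norm (M2 *v x)"
    define t1 where "t1 = a/mu"
    define t2 where "t2 = b/nu"
    have at: "a = mu*t1" "b = nu*t2" unfolding t1_def t2_def using mup nup by simp_all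
    have t0: "0 \<le> t1" "0 \<le> t2" unfolding t1_def t2_def a_def b_def using mup nup by simp_all
    have "a \<le> mu * norm x" unfolding a_def mu_def by (rule sn_bound)
    then have t1n: "t1 \<le> norm x" unfolding t1_def using mup by (simp add: divide_le_eq mult.commute)
    have "b \<le> nu * norm x" unfolding b_def nu_def by (rule sn_bound)
    then have t2n: "t2 \<le> norm x" unfolding t2_def using nup by (simp add: divide_le_eq mult.commute)
    have "(norm ((M1 + M2) *v x))^2 = a^2 + b^2 + 2*((M1 *v x) \<bullet> (M2 *v x))"
      unfolding a_def b_def matrix_vector_mult_add_rdistrib power2_norm_eq_inner
      by (simp add: inner_add_left inner_add_right inner_commute power2_eq_square)
    also have "\<dots> \<le> a^2 + b^2 + 2*(c*a*b)"
      using cpa_props(3)[OF assms, of x x] unfolding a_def b_def c_def by simp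
    also have "\<dots> = mu^2*t1^2+nu^2*t2^2+2*c*mu*nu*t1*t2"
      unfolding at by (simp add: power2_eq_square algebra_simps)
    also have "\<dots> \<le> lam*(norm x)^2"
    proof (rule main_alg[OF lam_def])
      show "\<And>s r. 0 \<le> s \<Longrightarrow> 0 \<le> r \<Longrightarrow>
       (s*t1^2 + r*t2^2)^2 \<le> (norm x)^2*(s^2*t1^2+r^2*t2^2+2*d* s*r*t1*t2)"
        unfolding t1_def t2_def a_def b_def mu_def nu_def d_def
        by (rule H_lemma[OF assms])
    qed (use mup nup c01 d01 t0 t1n t2n in auto)
    finally have "(norm ((M1 + M2) *v x))^2 \<le> lam*(norm x)^2" .
    then have "sqrt ((norm ((M1 + M2) *v x))^2) \<le> sqrt (lam*(norm x)^2)"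
      by (rule real_sqrt_le_mono)
    then show ?thesis by (simp add: real_sqrt_mult)
  qed
  have "spec_norm (M1 + M2) \<le> sqrt lam" unfolding spec_norm_def
    by (rule onorm_le) (rule key)
  then have "(spec_norm (M1 + M2))^2 \<le> (sqrt lam)^2"
    using power_mono sn_nonneg by blast
  also have "\<dots> = lam" using lam0 by simp
  also have "lam = Lambda2 mu nu (principal_angle M1 M2) (principal_angle (transpose M1) (transpose M2))"
  proof -
    have cc: "cos (principal_angle M1 M2) = c" "(sin (principal_angle M1 M2))^2 = 1 - c^2"
      unfolding principal_angle_def c_def[symmetric] using c01
      by (simp_all add: sin_arccos power_le_one)
    have dd: "cos (principal_angle (transpose M1) (transpose M2)) = d"
      "(sin (principal_angle (transpose M1) (transpose M2)))^2 = 1 - d^2"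
      unfolding principal_angle_def d_def[symmetric] using d01
      by (simp_all add: sin_arccos power_le_one)
    show ?thesis unfolding Lambda2_def lam_def cc dd by (simp add: algebra_simps)
  qed
  finally show ?thesis unfolding mu_def nu_def .
qed

end
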